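(* Let $p\ne q$ be primes, $G=\mathbb{Z}_p^2\times\mathbb{Z}_q^2$, and let $S\subseteq G$ be spectral with $\gcd(|S|,p^2q^2)=pq$ and $pq<|S|<pq\min\{p,q\}$. Then there exist nonzero $u\in\mathbb{Z}_p^2$ and nonzero $v\in\mathbb{Z}_q^2$ such that $\lambda u\notin S-S$ for every $\lambda\in\mathbb{Z}_p\setminus\{0\}$ and $\mu v\notin S-S$ for every $\mu\in\mathbb{Z}_q\setminus\{0\}$.
   Context: $\mathbb{Z}_p^2$ and $\mathbb{Z}_q^2$ are regarded as subgroups of $G$ (elements $(u,0)$ and $(0,v)$). For $w=(u,v)\in G$ define $\chi_w(a,b)=\exp\big(2\pi i(\tfrac{u\cdot a}{p}+\tfrac{v\cdot b}{q})\big)$ and $\chi(S)=\sum_{s\in S}\chi(s)$. $S$ is spectral if there is $\Lambda\subseteq G$ with $|\Lambda|=|S|$ and $\chi_{\lambda-\lambda'}(S)=0$ for all distinct $\lambda,\lambda'\in\Lambda$. *)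

theory Defs
  imports "HOL-Analysis.Analysis" "HOL-Computational_Algebra.Primes"
begin

text \<open>The group G = Z_p^2 x Z_q^2, elements represented as ((a1,a2),(b1,b2))
  with canonical representatives a_i in {0..<p}, b_i in {0..<q}.\<close>

type_synonym elt = "(int \<times> int) \<times> (int \<times> int)"

definition grp :: "int \<Rightarrow> int \<Rightarrow> elt set" where
  "grp p q = ({0..<p} \<times> {0..<p}) \<times> ({0..<q} \<times> {0..<q})"

definition gsub :: "int \<Rightarrow> int \<Rightarrow> elt \<Rightarrow> elt \<Rightarrow> elt" where
  "gsub p q x y =
     (((fst (fst x) - fst (fst y)) mod p, (snd (fst x) - snd (fst y)) mod p),
      ((fst (snd x) - fst (snd y)) mod q, (snd (snd x) - snd (snd y)) mod q))"

definition chr :: "int \<Rightarrow> int \<Rightarrow> elt \<Rightarrow> elt \<Rightarrow> complex" where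
  "chr p q w x = cis (2 * pi *
     (of_int (fst (fst w) * fst (fst x) + snd (fst w) * snd (fst x)) / of_int p +
      of_int (fst (snd w) * fst (snd x) + snd (snd w) * snd (snd x)) / of_int q))"

definition chr_sum :: "int \<Rightarrow> int \<Rightarrow> elt \<Rightarrow> elt set \<Rightarrow> complex" where
  "chr_sum p q w S = (\<Sum>s\<in>S. chr p q w s)"

definition spectral :: "int \<Rightarrow> int \<Rightarrow> elt set \<Rightarrow> bool" where
  "spectral p q S \<longleftrightarrow> (\<exists>\<Lambda>. \<Lambda> \<subseteq> grp p q \<and> card \<Lambda> = card S \<and>
     (\<forall>l\<in>\<Lambda>. \<forall>l'\<in>\<Lambda>. l \<noteq> l' \<longrightarrow> chr_sum p q (gsub p q l l') S = 0))"

definition diffset :: "int \<Rightarrow> int \<Rightarrow> elt set \<Rightarrow> elt set" where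
  "diffset p q S = {gsub p q x y | x y. x \<in> S \<and> y \<in> S}"

end

theory Submission imports Defs "Jordan_Normal_Form.Char_Poly" begin

definition psi :: "nat \<Rightarrow> int poly" where
  "psi p = (\<Sum>k<p. monom (int (p choose (k+1))) k)"

lemma coeff_psi: "coeff (psi p) k = (if k < p then int (p choose (k+1)) else 0)"
  by (simp add: psi_def coeff_sum coeff_monom)

lemma degree_psi: assumes "p \<ge> 1" shows "degree (psi p) = p - 1"
proof (rule antisym)
  show "degree (psi p) \<le> p - 1" by (rule degree_le) (auto simp: coeff_psi)
  show "p - 1 \<le> degree (psi p)" by (rule le_degree) (use assms in \<open>simp add: coeff_psi\<close>)
qed

lemma lead_psi: assumes "p \<ge> 1" shows "lead_coeff (psi p) = 1"
  using assms by (simp add: degree_psi coeff_psi)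

lemma eis_core:
  fixes g h :: "int poly"
  assumes p: "prime p" and gh: "psi p = g * h" and dg: "degree g \<ge> 1" and dh: "degree h \<ge> 1"
    and g0: "int p dvd coeff g 0" and h0: "\<not> int p dvd coeff h 0"
  shows False
proof -
  have p1: "p \<ge> 2" using p prime_ge_2_nat by blast
  have nz: "g \<noteq> 0" "h \<noteq> 0" using dg dh by auto
  have "degree (g*h) = p - 1" using degree_psi[of p] p1 gh by simp
  hence deg: "degree g + degree h = p - 1" using degree_mult_eq[OF nz] by simp
  have "lead_coeff (g*h) = 1" using lead_psi[of p] p1 gh by simp
  hence "lead_coeff g * lead_coeff h = 1" using lead_coeff_mult[of g h] by simp
  hence lg: "\<not> int p dvd lead_coeff g" using p1
    by (metis dvd_mult2 int_ops(2) nat_dvd_1_iff_1 numeral_le_one_iff of_nat_dvd_iff semiring_norm(69))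
  define i where "i = (LEAST i. \<not> int p dvd coeff g i)"
  have ex: "\<exists>i. \<not> int p dvd coeff g i" using lg by blast
  have ni: "\<not> int p dvd coeff g i" unfolding i_def using LeastI_ex[OF ex] .
  have ile: "i \<le> degree g" unfolding i_def using lg by (rule Least_le)
  have below: "\<And>k. k < i \<Longrightarrow> int p dvd coeff g k" unfolding i_def using not_less_Least by blast
  have i0: "i \<noteq> 0" using g0 ni by (cases i) auto
  have ilt: "i < p - 1" using deg dh ile by linarith
  have "int p dvd coeff (psi p) i"
  proof -
    have "p dvd (p choose (i+1))" using dvd_choose_prime[of "i+1" p] ilt p by auto
    thus ?thesis using ilt by (simp add: coeff_psi)
  qed
  moreover have "coeff (psi p) i = (\<Sum>k<i. coeff g k * coeff h (i - k)) + coeff g i * coeff h 0"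
    using gh by (simp add: coeff_mult lessThan_Suc_atMost[symmetric])
  moreover have "int p dvd (\<Sum>k<i. coeff g k * coeff h (i - k))"
    by (rule dvd_sum) (simp add: below)
  ultimately have "int p dvd coeff g i * coeff h 0"
    using dvd_add_right_iff[of "int p" "(\<Sum>k<i. coeff g k * coeff h (i - k))" "coeff g i * coeff h 0"] by simp
  hence "int p dvd coeff g i \<or> int p dvd coeff h 0"
    using p by (simp add: prime_dvd_mult_iff)
  thus False using ni h0 by blast
qed

lemma psi_irreducible: assumes p: "prime p" shows "irreducible (psi p)"
proof (rule irreducibleI)
  have p1: "p \<ge> 2" using p prime_ge_2_nat by blast
  show "psi p \<noteq> 0" using lead_psi[of p] p1 by auto
  show "\<not> psi p dvd 1"
    using degree_psi[of p] p1 by (auto simp: is_unit_poly_iff)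
  fix a b assume ab: "psi p = a * b"
  have ip: "prime (int p)" using p by simp
  have "lead_coeff (a*b) = 1" using lead_psi[of p] p1 ab by simp
  hence lab: "lead_coeff a * lead_coeff b = 1" using lead_coeff_mult[of a b] by simp
  show "a dvd 1 \<or> b dvd 1"
  proof (cases "degree a = 0 \<or> degree b = 0")
    case True
    then show ?thesis
    proof
      assume "degree a = 0"
      then obtain c where "a = [:c:]" using degree_eq_zeroE by blast
      moreover have "c dvd 1" using lab \<open>a = [:c:]\<close> by (metis dvdI lead_coeff_pCons(2) pCons_0_0)
      ultimately show ?thesis by (auto simp: is_unit_poly_iff)
    next
      assume "degree b = 0"
      then obtain c where "b = [:c:]" using degree_eq_zeroE by blast
      moreover have "c dvd 1" using lab \<open>b = [:c:]\<close> by (metis dvdI mult.commute lead_coeff_pCons(2) pCons_0_0)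
      ultimately show ?thesis by (auto simp: is_unit_poly_iff)
    qed
  next
    case False
    have c0: "coeff a 0 * coeff b 0 = int p"
      using arg_cong[OF ab, of "\<lambda>x. coeff x 0"] p1 by (simp add: coeff_psi coeff_mult)
    hence "int p dvd coeff a 0 * coeff b 0" by simp
    hence d: "int p dvd coeff a 0 \<or> int p dvd coeff b 0" using ip prime_dvd_mult_iff by blast
    have nd: "\<not> (int p dvd coeff a 0 \<and> int p dvd coeff b 0)"
    proof
      assume "int p dvd coeff a 0 \<and> int p dvd coeff b 0"
      hence "int p * int p dvd int p" using c0 by (metis mult_dvd_mono)
      thus False using p1 by simp
    qed
    show ?thesis
    proof (cases "int p dvd coeff a 0")
      case True
      with nd have "\<not> int p dvd coeff b 0" by blast
      from eis_core[OF p ab _ _ True this] False show ?thesis by auto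
    next
      case F: False
      with d have "int p dvd coeff b 0" by blast
      moreover have "psi p = b * a" using ab by (simp add: mult.commute)
      ultimately show ?thesis using eis_core[OF p, of b a] F False by auto
    qed
  qed
qed


lemma min_deg:
  fixes Q :: "int poly" and \<alpha> :: complex
  assumes pr: "prime_elem Q" and Q0: "poly (map_poly of_int Q) \<alpha> = 0"
  shows "P \<noteq> 0 \<Longrightarrow> poly (map_poly of_int P) \<alpha> = 0 \<Longrightarrow> degree Q \<le> degree P"
proof (induction "degree P" arbitrary: P rule: less_induct)
  case less
  interpret m: map_poly_inj_idom_hom "of_int :: int \<Rightarrow> complex" ..
  show ?case
  proof (rule ccontr)
    assume lt: "\<not> degree Q \<le> degree P"
    define r where "r = pseudo_mod Q P"
    obtain a q where aq: "a \<noteq> 0" "Polynomial.smult a Q = P * q + r"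
      using pseudo_mod(1)[OF less.prems(1)] r_def by blast
    have rd: "r = 0 \<or> degree r < degree P" using pseudo_mod(2)[OF less.prems(1)] r_def by blast
    have "poly (map_poly of_int (Polynomial.smult a Q)) \<alpha> = poly (map_poly of_int (P*q + r)) \<alpha>"
      using aq(2) by simp
    hence r0: "poly (map_poly of_int r) \<alpha> = 0" using Q0 less.prems(2)
      by (simp add: hom_distribs)
    have "r = 0"
    proof (rule ccontr)
      assume "r \<noteq> 0"
      with rd have "degree r < degree P" by auto
      from less.hyps[OF this \<open>r \<noteq> 0\<close> r0] have "degree Q \<le> degree r" .
      thus False using lt \<open>degree r < degree P\<close> by linarith
    qed
    hence eq: "[:a:] * Q = P * q" using aq by simp
    hence "Q dvd P * q" by (metis dvd_triv_right)
    hence "Q dvd P \<or> Q dvd q" using pr prime_elem_dvd_multD by blast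
    then show False
    proof
      assume "Q dvd P"
      thus False using lt less.prems(1) dvd_imp_degree_le by blast
    next
      assume "Q dvd q"
      then obtain k where k: "q = Q * k" by blast
      have Qnz: "Q \<noteq> 0" using pr by auto
      have "[:a:] * Q = (P * k) * Q" using eq k by (simp add: ac_simps)
      hence "[:a:] = P * k" using Qnz by (metis mult_right_cancel)
      hence "k \<noteq> 0" "degree (P * k) = 0" using aq(1) by (auto, metis degree_pCons_0)
      hence "degree P = 0" using degree_mult_eq[OF less.prems(1) \<open>k \<noteq> 0\<close>] by simp
      then obtain c where "P = [:c:]" using degree_eq_zeroE by blast
      thus False using less.prems by simp
    qed
  qed
qed


lemma omega_pow_ne1:
  fixes k p :: nat
  assumes "0 < k" "k < p" shows "cis (2*pi/p) ^ k \<noteq> 1"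
proof
  assume a: "cis (2*pi/p)^k = 1"
  have "cis (real k * (2*pi/p)) = 1" using a by (simp only: Complex.DeMoivre)
  hence "Re (cis (real k * (2*pi/p))) = 1" by simp
  hence "cos (real k * (2*pi/p)) = 1" by (simp only: cis.sel)
  then obtain n::int where n: "real k * (2*pi/p) = real_of_int n * 2 * pi" using cos_one_2pi_int by blast
  have pp: "real p > 0" using assms by simp
  have "real k = n * p" using n pp by (simp add: field_simps)
  hence "real_of_int (int k) = real_of_int (n * int p)" by simp
  hence kn: "int k = n * int p" by (simp only: of_int_eq_iff)
  show False
  proof (cases "n \<le> 0")
    case True
    hence "n * int p \<le> 0" by (simp add: mult_nonpos_nonneg)
    thus False using kn assms by simp
  next
    case False
    hence "1 * int p \<le> n * int p" by (intro mult_right_mono) simp_all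
    moreover have "int k < int p" using assms by simp
    ultimately show False using kn by linarith
  qed
qed

lemma omega_pow_p: "p > 0 \<Longrightarrow> cis (2*pi/p) ^ p = 1"
  by (simp add: Complex.DeMoivre)

lemma sum_omega: assumes "p \<ge> 2" shows "(\<Sum>j<p. cis (2*pi/p) ^ j) = 0"
proof -
  have "cis (2*pi/p) \<noteq> 1" using omega_pow_ne1[of 1 p] assms by simp
  from geometric_sum[OF this, of p] show ?thesis using omega_pow_p[of p] assms by simp
qed

lemma poly_psi: "poly (map_poly (of_int :: int \<Rightarrow> complex) (psi p)) x = (\<Sum>k<p. of_nat (p choose (k+1)) * x^k)"
proof -
  interpret m: map_poly_inj_idom_hom "of_int :: int \<Rightarrow> complex" ..
  show ?thesis by (simp add: psi_def hom_distribs poly_sum map_poly_monom poly_monom)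
qed

lemma cyc:
  fixes p :: nat and a :: "nat \<Rightarrow> int"
  assumes p: "prime p" and s: "(\<Sum>j<p. of_int (a j) * cis (2*pi/p) ^ j) = 0"
  shows "j < p \<Longrightarrow> a j = a (p - 1)"
proof -
  interpret m: map_poly_inj_idom_hom "of_int :: int \<Rightarrow> complex" ..
  have p2: "p \<ge> 2" using p prime_ge_2_nat by blast
  define \<omega> where "\<omega> = cis (2*pi/p)"
  have wp: "\<omega>^p = 1" unfolding \<omega>_def using omega_pow_p p2 by simp
  have w1: "\<omega> \<noteq> 1" using omega_pow_ne1[of 1 p] p2 unfolding \<omega>_def by simp
  have sw: "(\<Sum>j<p. \<omega>^j) = 0" using sum_omega p2 unfolding \<omega>_def by simp
  define \<alpha> where "\<alpha> = \<omega> - 1"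
  have a0: "\<alpha> \<noteq> 0" using w1 \<alpha>_def by simp
  have "\<alpha> * poly (map_poly of_int (psi p)) \<alpha> = (\<Sum>k<p. of_nat (p choose (Suc k)) * \<alpha>^(Suc k))"
    by (simp add: poly_psi sum_distrib_left ac_simps)
  also have "\<dots> = (\<alpha> + 1)^p - 1"
  proof -
    have "(\<alpha> + 1)^p = (\<Sum>k\<le>p. of_nat (p choose k) * \<alpha>^k)" by (simp add: binomial_ring)
    also have "\<dots> = (\<Sum>k<Suc p. of_nat (p choose k) * \<alpha>^k)" by (simp add: lessThan_Suc_atMost)
    also have "\<dots> = 1 + (\<Sum>k<p. of_nat (p choose (Suc k)) * \<alpha>^(Suc k))"
      by (subst sum.lessThan_Suc_shift) simp
    finally show ?thesis by simp
  qed
  also have "\<dots> = 0" using wp \<alpha>_def by simp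
  finally have psi0: "poly (map_poly of_int (psi p)) \<alpha> = 0" using a0 by simp
  define B where "B = (\<Sum>j<p. monom (a j - a (p - 1)) j)"
  have cB: "coeff B j = (if j < p then a j - a (p - 1) else 0)" for j
    by (simp add: B_def coeff_sum coeff_monom)
  have dB: "degree B \<le> p - 2"
  proof (rule degree_le, intro allI impI)
    fix i assume i: "p - 2 < i"
    show "coeff B i = 0"
    proof (cases "i < p")
      case True
      hence "i = p - 1" using i by linarith
      thus ?thesis by (simp add: cB)
    qed (simp add: cB)
  qed
  have pB: "poly (map_poly of_int B) \<omega> = 0"
  proof -
    have "poly (map_poly of_int B) \<omega> = (\<Sum>j<p. (of_int (a j) - of_int (a (p-1))) * \<omega>^j)"
      by (simp add: B_def hom_distribs poly_sum map_poly_monom poly_monom)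
    also have "\<dots> = (\<Sum>j<p. of_int (a j) * \<omega>^j) - of_int (a (p-1)) * (\<Sum>j<p. \<omega>^j)"
      by (simp add: algebra_simps sum_subtractf sum_distrib_left sum_distrib_right)
    also have "\<dots> = 0" using s sw unfolding \<omega>_def by simp
    finally show ?thesis .
  qed
  have B0: "B = 0"
  proof (rule ccontr)
    assume Bnz: "B \<noteq> 0"
    define C where "C = pcompose B [:1,1:]"
    have Cnz: "C \<noteq> 0" using Bnz pcompose_eq_0[of B "[:1,1:]"] C_def by auto
    have dC: "degree C = degree B" by (simp add: C_def degree_pcompose)
    have "poly (map_poly of_int C) \<alpha> = poly (map_poly of_int B) (1 + \<alpha>)"
      by (simp add: C_def hom_distribs poly_pcompose)
    also have "1 + \<alpha> = \<omega>" using \<alpha>_def by simp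
    finally have "poly (map_poly of_int C) \<alpha> = 0" using pB by simp
    from min_deg[OF irreducible_imp_prime_poly[OF psi_irreducible[OF p]] psi0 Cnz this]
    have "degree (psi p) \<le> degree C" .
    thus False using dC dB degree_psi[of p] p2 by simp
  qed
  assume "j < p"
  thus "a j = a (p - 1)" using cB[of j] B0 by simp
qed

lemma sum_nth_distinct: "distinct xs \<Longrightarrow> (\<Sum>j<length xs. g (xs!j)) = (\<Sum>s\<in>set xs. g s)"
  using sum.reindex_bij_betw[OF bij_betw_nth[of xs "{..<length xs}" "set xs"], of g] by simp

lemma dual_generic:
  fixes f :: "'a \<Rightarrow> 'b \<Rightarrow> complex"
  assumes fS: "finite S" and fL: "finite L" and cL: "card L = card S"
    and unit: "\<And>l s. f l s * cnj (f l s) = 1"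
    and orth: "\<And>l l'. l \<in> L \<Longrightarrow> l' \<in> L \<Longrightarrow> l \<noteq> l' \<Longrightarrow> (\<Sum>s\<in>S. f l s * cnj (f l' s)) = 0"
    and s: "s \<in> S" "s' \<in> S" "s \<noteq> s'"
  shows "(\<Sum>l\<in>L. cnj (f l s) * f l s') = 0"
proof -
  obtain xs where xs: "distinct xs" "set xs = S" using finite_distinct_list[OF fS] by blast
  obtain ys where ys: "distinct ys" "set ys = L" using finite_distinct_list[OF fL] by blast
  define n where "n = card S"
  have lxs: "length xs = n" using xs n_def distinct_card by fastforce
  have lys: "length ys = n" using ys n_def cL distinct_card by fastforce
  have n0: "n \<noteq> 0" using s fS n_def by auto
  define A where "A = Matrix.mat n n (\<lambda>(i,j). f (ys!i) (xs!j))"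
  define B where "B = Matrix.mat n n (\<lambda>(i,j). cnj (f (ys!j) (xs!i)) / of_nat n)"
  have A: "A \<in> carrier_mat n n" and B: "B \<in> carrier_mat n n" by (simp_all add: A_def B_def)
  have AB: "A * B = 1\<^sub>m n"
  proof (rule eq_matI)
    fix i k assume ik: "i < dim_row (1\<^sub>m n :: complex mat)" "k < dim_col (1\<^sub>m n :: complex mat)"
    hence ik': "i < n" "k < n" by auto
    have "(A * B) $$ (i,k) = (\<Sum>j<n. f (ys!i) (xs!j) * (cnj (f (ys!k) (xs!j)) / of_nat n))"
      using ik' by (simp add: A_def B_def scalar_prod_def atLeast0LessThan)
    also have "\<dots> = (\<Sum>j<length xs. (\<lambda>s. f (ys!i) s * cnj (f (ys!k) s) / of_nat n) (xs!j))"
      using lxs by simp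
    also have "\<dots> = (\<Sum>s\<in>S. f (ys!i) s * cnj (f (ys!k) s)) / of_nat n"
      using sum_nth_distinct[OF xs(1)] xs(2) by (simp add: sum_divide_distrib)
    also have "\<dots> = (if i = k then 1 else 0)"
    proof (cases "i = k")
      case True
      thus ?thesis using unit n0 n_def by simp
    next
      case False
      have "ys!i \<noteq> ys!k" using False ys(1) ik' lys nth_eq_iff_index_eq by metis
      moreover have "ys!i \<in> L" "ys!k \<in> L" using ik' lys ys(2) by auto
      ultimately show ?thesis using orth False by simp
    qed
    also have "\<dots> = (1\<^sub>m n :: complex mat) $$ (i,k)" using ik' by simp
    finally show "(A * B) $$ (i,k) = (1\<^sub>m n :: complex mat) $$ (i,k)" .
  qed (simp_all add: A_def B_def)
  have BA: "B * A = 1\<^sub>m n" using mat_mult_left_right_inverse[OF A B AB] .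
  obtain j where j: "j < n" "xs!j = s" using s(1) xs lxs by (metis in_set_conv_nth)
  obtain k where k: "k < n" "xs!k = s'" using s(2) xs lxs by (metis in_set_conv_nth)
  have jk: "j \<noteq> k" using j k s(3) by auto
  have "0 = (B * A) $$ (j,k)" using BA j k jk by simp
  also have "\<dots> = (\<Sum>i<n. cnj (f (ys!i) (xs!j)) / of_nat n * f (ys!i) (xs!k))"
    using j k by (simp add: A_def B_def scalar_prod_def atLeast0LessThan)
  also have "\<dots> = (\<Sum>i<length ys. (\<lambda>l. cnj (f l s) * f l s' / of_nat n) (ys!i))"
    using lys j k by simp
  also have "\<dots> = (\<Sum>l\<in>L. cnj (f l s) * f l s') / of_nat n"
    using sum_nth_distinct[OF ys(1)] ys(2) by (simp add: sum_divide_distrib)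
  finally show ?thesis using n0 by simp
qed


lemma cis_int: "cis (2*pi*(x + of_int k)) = cis (2*pi*x)"
proof -
  have "cis (2*pi*(x + of_int k)) = cis (2*pi*x) * cis (2*pi * of_int k)"
    by (simp add: cis_mult[symmetric] distrib_left)
  also have "cis (2*pi * of_int k) = 1" by (rule cis_multiple_2pi) simp
  finally show ?thesis by simp
qed

lemma cis_cong:
  fixes p q a a' b b' :: int
  assumes "p \<noteq> 0" "q \<noteq> 0" "p dvd (a - a')" "q dvd (b - b')"
  shows "cis (2*pi*(of_int a/of_int p + of_int b/of_int q)) = cis (2*pi*(of_int a'/of_int p + of_int b'/of_int q))"
proof -
  obtain k where k: "a - a' = p*k" using assms(3) by (auto simp: dvd_def)
  obtain m where m: "b - b' = q*m" using assms(4) by (auto simp: dvd_def)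
  have a: "a = a' + p*k" and b: "b = b' + q*m" using k m by simp_all
  have "(of_int a/of_int p + of_int b/of_int q :: real) = (of_int a'/of_int p + of_int b'/of_int q) + of_int (k + m)"
  proof -
    have "(of_int p::real) \<noteq> 0" "(of_int q::real) \<noteq> 0" using assms(1,2) by simp_all
    thus ?thesis by (simp add: a b field_simps)
  qed
  thus ?thesis using cis_int by metis
qed

lemma cis_cong1:
  fixes p a a' :: int
  assumes "p \<noteq> 0" "p dvd (a - a')"
  shows "cis (2*pi*(of_int a/of_int p)) = cis (2*pi*(of_int a'/of_int p))"
  using cis_cong[OF assms(1) one_neq_zero assms(2), of 0 0] by simp

lemma chr_mc:
  "chr p q w x * cnj (chr p q w' x') = cis (2*pi*(
     of_int ((fst (fst w) * fst (fst x) + snd (fst w) * snd (fst x)) - (fst (fst w') * fst (fst x') + snd (fst w') * snd (fst x'))) / of_int p +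
     of_int ((fst (snd w) * fst (snd x) + snd (snd w) * snd (snd x)) - (fst (snd w') * fst (snd x') + snd (snd w') * snd (snd x'))) / of_int q))"
  unfolding chr_def cis_cnj cis_mult
  by (rule arg_cong[where f=cis]) (simp add: diff_divide_distrib algebra_simps)

lemma chr_unit: "chr p q w x * cnj (chr p q w x) = 1"
proof -
  have n: "norm (chr p q w x) = 1" by (simp add: chr_def)
  have "chr p q w x * cnj (chr p q w x) = of_real ((norm (chr p q w x))^2)"
    by (rule complex_norm_square[symmetric])
  also have "\<dots> = 1" by (simp only: n) simp
  finally show ?thesis .
qed

lemma dvd_mod_diff: "(p::int) dvd (x mod p - x)"
proof -
  have "x mod p - x = - (p * (x div p))" using mult_div_mod_eq[of p x] by linarith
  thus ?thesis by simp
qed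

lemma dvd_lin2: "(p::int) dvd (a1 mod p * x1 + a2 mod p * x2) - (a1 * x1 + a2 * x2)"
proof -
  have "(a1 mod p * x1 + a2 mod p * x2) - (a1 * x1 + a2 * x2) = (a1 mod p - a1) * x1 + (a2 mod p - a2) * x2"
    by (simp add: algebra_simps)
  thus ?thesis by (simp only: dvd_add dvd_mult2 dvd_mod_diff)
qed

lemma chr_gsub:
  assumes "p \<noteq> 0" "q \<noteq> 0"
  shows "chr p q (gsub p q l l') s = chr p q l s * cnj (chr p q l' s)"
proof -
  have e1: "(fst (fst l) * fst (fst s) + snd (fst l) * snd (fst s) - (fst (fst l') * fst (fst s) + snd (fst l') * snd (fst s)))
     = (fst (fst l) - fst (fst l')) * fst (fst s) + (snd (fst l) - snd (fst l')) * snd (fst s)"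
    by (simp add: algebra_simps)
  have e2: "(fst (snd l) * fst (snd s) + snd (snd l) * snd (snd s) - (fst (snd l') * fst (snd s) + snd (snd l') * snd (snd s)))
     = (fst (snd l) - fst (snd l')) * fst (snd s) + (snd (snd l) - snd (snd l')) * snd (snd s)"
    by (simp add: algebra_simps)
  show ?thesis
    unfolding chr_mc e1 e2
    unfolding chr_def gsub_def fst_conv snd_conv
    by (rule cis_cong[OF assms dvd_lin2 dvd_lin2])
qed

lemma chr_term:
  assumes p: "p \<noteq> 0" and q: "q \<noteq> 0" and g: "gsub p q s s' = ((a1 mod p, a2 mod p), (0, 0))"
  shows "chr p q w s * cnj (chr p q w s') = cis (2*pi*(of_int (fst (fst w) * a1 + snd (fst w) * a2)/of_int p))"
proof -
  from g have e: "(fst (fst s) - fst (fst s')) mod p = a1 mod p" "(snd (fst s) - snd (fst s')) mod p = a2 mod p"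
    "(fst (snd s) - fst (snd s')) mod q = 0 mod q" "(snd (snd s) - snd (snd s')) mod q = 0 mod q"
    by (simp_all add: gsub_def)
  hence d: "p dvd (fst (fst s) - fst (fst s')) - a1" "p dvd (snd (fst s) - snd (fst s')) - a2"
    "q dvd (fst (snd s) - fst (snd s')) - 0" "q dvd (snd (snd s) - snd (snd s')) - 0"
    by (simp_all only: mod_eq_dvd_iff)
  have "chr p q w s * cnj (chr p q w s') = cis (2*pi*(of_int (fst (fst w) * a1 + snd (fst w) * a2)/of_int p + of_int 0/of_int q))"
    unfolding chr_mc
  proof (rule cis_cong[OF p q])
    have "(fst (fst w) * fst (fst s) + snd (fst w) * snd (fst s) - (fst (fst w) * fst (fst s') + snd (fst w) * snd (fst s'))) -
      (fst (fst w) * a1 + snd (fst w) * a2) = fst (fst w) * ((fst (fst s) - fst (fst s')) - a1) + snd (fst w) * ((snd (fst s) - snd (fst s')) - a2)"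
      by (simp add: algebra_simps)
    thus "p dvd (fst (fst w) * fst (fst s) + snd (fst w) * snd (fst s) - (fst (fst w) * fst (fst s') + snd (fst w) * snd (fst s'))) -
      (fst (fst w) * a1 + snd (fst w) * a2)" using d(1,2) by simp
    have "(fst (snd w) * fst (snd s) + snd (snd w) * snd (snd s) - (fst (snd w) * fst (snd s') + snd (snd w) * snd (snd s'))) - 0
      = fst (snd w) * ((fst (snd s) - fst (snd s')) - 0) + snd (snd w) * ((snd (snd s) - snd (snd s')) - 0)"
      by (simp add: algebra_simps)
    thus "q dvd (fst (snd w) * fst (snd s) + snd (snd w) * snd (snd s) - (fst (snd w) * fst (snd s') + snd (snd w) * snd (snd s'))) - 0"
      using d(3,4) by (simp only: dvd_add dvd_mult)
  qed
  thus ?thesis by simp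
qed

lemma cis_W:
  fixes p a :: int
  assumes "p > 0"
  shows "cis (2*pi*(of_int a/of_int p)) = cis (2*pi/real (nat p)) ^ nat (a mod p)"
proof -
  have "cis (2*pi/real (nat p)) ^ nat (a mod p) = cis (real (nat (a mod p)) * (2*pi/real (nat p)))"
    by (simp add: Complex.DeMoivre)
  also have "real (nat (a mod p)) * (2*pi/real (nat p)) = 2*pi*(of_int (a mod p)/of_int p)"
    using assms by simp
  also have "cis \<dots> = cis (2*pi*(of_int a/of_int p))"
    by (rule cis_cong1) (use assms in \<open>simp_all add: mod_eq_dvd_iff[symmetric]\<close>)
  finally show ?thesis by simp
qed

lemma sum_group_pow:
  fixes g :: "'x \<Rightarrow> nat" and z :: complex
  assumes "finite A" "\<And>x. x \<in> A \<Longrightarrow> g x < P"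
  shows "(\<Sum>x\<in>A. z ^ g x) = (\<Sum>j<P. of_int (int (card {x\<in>A. g x = j})) * z ^ j)"
proof -
  have "(\<Sum>x\<in>A. z ^ g x) = (\<Sum>j<P. \<Sum>x\<in>{x. x\<in>A \<and> g x = j}. z ^ g x)"
    by (rule sum.group[symmetric, OF assms(1) finite_lessThan]) (use assms in auto)
  also have "\<dots> = (\<Sum>j<P. \<Sum>x\<in>{x\<in>A. g x = j}. z ^ j)" by (rule sum.cong) auto
  also have "\<dots> = (\<Sum>j<P. of_int (int (card {x\<in>A. g x = j})) * z ^ j)" by simp
  finally show ?thesis .
qed

lemma galois:
  fixes p l :: int and r :: "'x \<Rightarrow> int"
  assumes p: "prime p" and A: "finite A" and l: "\<not> p dvd l"
    and s: "(\<Sum>x\<in>A. cis (2*pi*(of_int (l * r x)/of_int p))) = 0"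
  shows "(\<Sum>x\<in>A. cis (2*pi*(of_int (r x)/of_int p))) = 0"
proof -
  define P where "P = nat p"
  have p0: "p > 0" using p prime_gt_0_int by blast
  have pP: "int P = p" using p0 P_def by simp
  have "prime (int P)" using p pP by simp
  hence P: "prime P" by simp
  define \<omega> where "\<omega> = cis (2*pi/real P)"
  define c where "c j = int (card {x\<in>A. nat ((l * r x) mod p) = j})" for j
  define d where "d j = int (card {x\<in>A. nat (r x mod p) = j})" for j
  have lt: "\<And>y. nat (y mod p) < P" using p0 P_def by (simp add: nat_less_eq_zless)
  have "(\<Sum>j<P. of_int (c j) * \<omega> ^ j) = 0"
  proof -
    have "(\<Sum>j<P. of_int (c j) * \<omega> ^ j) = (\<Sum>x\<in>A. \<omega> ^ nat ((l * r x) mod p))"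
      unfolding c_def by (rule sum_group_pow[symmetric]) (use A lt in auto)
    also have "\<dots> = (\<Sum>x\<in>A. cis (2*pi*(of_int (l * r x)/of_int p)))"
      by (rule sum.cong[OF refl]) (unfold \<omega>_def P_def, rule cis_W[OF p0, symmetric])
    finally show ?thesis using s by simp
  qed
  hence cc: "\<And>j. j < P \<Longrightarrow> c j = c (P - 1)" using cyc[OF P] \<omega>_def by auto
  have dc: "\<And>j. j < P \<Longrightarrow> d j = c (nat ((l * int j) mod p))"
  proof -
    fix j assume j: "j < P"
    have jm: "int j mod p = int j" using j pP by simp
    have "{x\<in>A. nat (r x mod p) = j} = {x\<in>A. nat ((l * r x) mod p) = nat ((l * int j) mod p)}"
    proof (intro Collect_cong conj_cong refl)
      fix x
      show "nat (r x mod p) = j \<longleftrightarrow> nat ((l * r x) mod p) = nat ((l * int j) mod p)"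
      proof
        assume "nat (r x mod p) = j"
        hence "r x mod p = int j mod p" using jm p0 by auto
        thus "nat ((l * r x) mod p) = nat ((l * int j) mod p)" by (metis mod_mult_right_eq)
      next
        assume "nat ((l * r x) mod p) = nat ((l * int j) mod p)"
        hence "(l * r x) mod p = (l * int j) mod p" using p0 by (simp add: eq_nat_nat_iff)
        hence "p dvd l * (r x - int j)" by (simp add: mod_eq_dvd_iff right_diff_distrib)
        hence "p dvd r x - int j" using p l prime_dvd_mult_iff by blast
        hence "r x mod p = int j mod p" by (simp add: mod_eq_dvd_iff)
        thus "nat (r x mod p) = j" using jm by simp
      qed
    qed
    thus "d j = c (nat ((l * int j) mod p))" by (simp add: c_def d_def)
  qed
  have "(\<Sum>x\<in>A. cis (2*pi*(of_int (r x)/of_int p))) = (\<Sum>x\<in>A. \<omega> ^ nat (r x mod p))"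
    by (rule sum.cong[OF refl]) (unfold \<omega>_def P_def, rule cis_W[OF p0])
  also have "\<dots> = (\<Sum>j<P. of_int (d j) * \<omega> ^ j)"
    unfolding d_def by (rule sum_group_pow) (use A lt in auto)
  also have "\<dots> = (\<Sum>j<P. of_int (c (P - 1)) * \<omega> ^ j)"
  proof (rule sum.cong[OF refl])
    fix j assume "j \<in> {..<P}"
    hence "d j = c (P - 1)" using dc cc[OF lt] by simp
    thus "of_int (d j) * \<omega> ^ j = of_int (c (P - 1)) * \<omega> ^ j" by simp
  qed
  also have "\<dots> = of_int (c (P-1)) * (\<Sum>j<P. \<omega> ^ j)" by (simp add: sum_distrib_left)
  also have "\<dots> = 0" using sum_omega[of P] P prime_ge_2_nat \<omega>_def by auto
  finally show ?thesis .
qed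

lemma geo_G:
  fixes p x :: int
  assumes p: "prime p" and x: "0 \<le> x" "x < p"
  shows "(\<Sum>u<nat p. cis (2*pi*(of_int (x * int u)/of_int p))) = (if x = 0 then of_nat (nat p) else 0)"
proof (cases "x = 0")
  case True thus ?thesis by simp
next
  case False
  define P where "P = nat p"
  have p0: "p > 0" using p prime_gt_0_int by blast
  have pP: "int P = p" using p0 P_def by simp
  have "prime (int P)" using p pP by simp
  hence "prime P" by simp
  hence P2: "P \<ge> 2" using prime_ge_2_nat by blast
  define z where "z = cis (2*pi/real P) ^ nat x"
  have zu: "cis (2*pi*(of_int (x * int u)/of_int p)) = z ^ u" for u
  proof -
    have "z ^ u = cis (2*pi/real P) ^ (nat x * u)" by (simp add: z_def power_mult)
    also have "\<dots> = cis (real (nat x * u) * (2*pi/real P))" by (simp add: Complex.DeMoivre)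
    also have "real (nat x * u) * (2*pi/real P) = 2*pi*(of_int (x * int u)/of_int p)"
      using x pP by (simp add: field_simps)
    finally show ?thesis by simp
  qed
  have z1: "z \<noteq> 1" unfolding z_def using omega_pow_ne1[of "nat x" P] False x pP by simp
  have zP: "z ^ P = 1"
  proof -
    have "z ^ P = (cis (2*pi/real P) ^ P) ^ nat x" by (simp add: z_def power_mult[symmetric] mult.commute)
    also have "\<dots> = 1" using omega_pow_p[of P] P2 by simp
    finally show ?thesis .
  qed
  have "(\<Sum>u<P. z ^ u) = 0" using geometric_sum[OF z1, of P] zP by simp
  moreover have "(\<Sum>u<P. cis (2*pi*(of_int (x * int u)/of_int p))) = (\<Sum>u<P. z ^ u)"
    by (simp only: zu)
  ultimately have "(\<Sum>u<nat p. cis (2*pi*(of_int (x * int u)/of_int p))) = 0" unfolding P_def by simp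
  thus ?thesis using False by simp
qed

lemma fourier:
  fixes p :: int and L :: "elt set"
  assumes p: "prime p" and fL: "finite L"
    and rng: "\<And>w. w \<in> L \<Longrightarrow> fst (fst w) \<in> {0..<p} \<and> snd (fst w) \<in> {0..<p}"
    and H: "\<And>u1 u2. u1 \<in> {0..<p} \<Longrightarrow> u2 \<in> {0..<p} \<Longrightarrow> (u1, u2) \<noteq> (0,0) \<Longrightarrow>
       (\<Sum>w\<in>L. cis (2*pi*(of_int (fst (fst w) * u1 + snd (fst w) * u2)/of_int p))) = 0"
  shows "int (card L) = p^2 * int (card {w\<in>L. fst w = (0,0)})"
proof -
  define P where "P = nat p"
  have p0: "p > 0" using p prime_gt_0_int by blast
  have pP: "int P = p" using p0 P_def by simp
  define F where "F u1 u2 = (\<Sum>w\<in>L. cis (2*pi*(of_int (fst (fst w) * u1 + snd (fst w) * u2)/of_int p)))" for u1 u2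
  define G where "G x = (\<Sum>u<P. cis (2*pi*(of_int (x * int u)/of_int p)))" for x
  have "(\<Sum>n1<P. \<Sum>n2<P. F (int n1) (int n2)) = (\<Sum>n1<P. \<Sum>n2<P. if n1 = 0 then (if n2 = 0 then of_nat (card L) else 0) else 0)"
  proof (intro sum.cong refl)
    fix n1 n2 assume n: "n1 \<in> {..<P}" "n2 \<in> {..<P}"
    show "F (int n1) (int n2) = (if n1 = 0 then (if n2 = 0 then of_nat (card L) else 0) else 0)"
    proof (cases "n1 = 0 \<and> n2 = 0")
      case True thus ?thesis by (simp add: F_def)
    next
      case False
      have "F (int n1) (int n2) = 0" unfolding F_def
        by (rule H) (use n pP False in auto)
      thus ?thesis using False by auto
    qed
  qed
  also have "\<dots> = (\<Sum>n1<P. if n1 = 0 then of_nat (card L) else 0)"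
    by (rule sum.cong[OF refl]) simp
  also have "\<dots> = of_nat (card L)" using p0 P_def by simp
  finally have A: "(\<Sum>n1<P. \<Sum>n2<P. F (int n1) (int n2)) = of_nat (card L)" .
  have "(\<Sum>n1<P. \<Sum>n2<P. F (int n1) (int n2)) =
     (\<Sum>n1<P. \<Sum>n2<P. \<Sum>w\<in>L. cis (2*pi*(of_int (fst (fst w) * int n1)/of_int p)) * cis (2*pi*(of_int (snd (fst w) * int n2)/of_int p)))"
    unfolding F_def by (simp add: cis_mult add_divide_distrib distrib_left)
  also have "\<dots> = (\<Sum>w\<in>L. \<Sum>n1<P. \<Sum>n2<P. cis (2*pi*(of_int (fst (fst w) * int n1)/of_int p)) * cis (2*pi*(of_int (snd (fst w) * int n2)/of_int p)))"
    by (subst sum.swap, subst (2) sum.swap, rule refl)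
  also have "\<dots> = (\<Sum>w\<in>L. G (fst (fst w)) * G (snd (fst w)))"
    unfolding G_def by (simp add: sum_product)
  also have "\<dots> = (\<Sum>w\<in>L. if fst w = (0,0) then of_nat (P * P) else 0)"
  proof (rule sum.cong[OF refl])
    fix w assume "w \<in> L"
    obtain a b where fw: "fst w = (a, b)" by (cases "fst w") blast
    from rng[OF \<open>w \<in> L\<close>] fw have ab: "0 \<le> a" "a < p" "0 \<le> b" "b < p" by auto
    have Ga: "G a = (if a = 0 then of_nat P else 0)"
      unfolding G_def P_def by (rule geo_G[OF p ab(1,2)])
    have Gb: "G b = (if b = 0 then of_nat P else 0)"
      unfolding G_def P_def by (rule geo_G[OF p ab(3,4)])
    show "G (fst (fst w)) * G (snd (fst w)) = (if fst w = (0,0) then of_nat (P * P) else 0)"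
      by (simp add: fw Ga Gb)
  qed
  also have "\<dots> = of_nat (P * P * card {w\<in>L. fst w = (0,0)})"
  proof -
    have "(\<Sum>w\<in>L. if fst w = (0,0) then (of_nat (P * P) :: complex) else 0) = (\<Sum>w\<in>{w\<in>L. fst w = (0,0)}. of_nat (P * P))"
      by (rule sum.inter_filter[OF fL, symmetric])
    thus ?thesis by simp
  qed
  finally have "of_nat (card L) = (of_nat (P * P * card {w\<in>L. fst w = (0,0)}) :: complex)" using A by simp
  hence "card L = P * P * card {w\<in>L. fst w = (0,0)}" using of_nat_eq_iff by blast
  hence "int (card L) = int P * int P * int (card {w\<in>L. fst w = (0,0)})" by simp
  thus ?thesis using pP by (simp add: power2_eq_square)
qed


lemma dvd_small_int: "0 \<le> (u::int) \<Longrightarrow> u < p \<Longrightarrow> p dvd u \<Longrightarrow> u = 0"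
  using zdvd_imp_le by fastforce

lemma partP:
  fixes p q :: int and S L :: "elt set"
  assumes p: "prime p" and q: "q \<noteq> 0" and fL: "finite L" and LG: "L \<subseteq> grp p q"
    and ndvd: "\<not> p^2 dvd int (card L)"
    and dual: "\<And>s s'. s \<in> S \<Longrightarrow> s' \<in> S \<Longrightarrow> s \<noteq> s' \<Longrightarrow> (\<Sum>w\<in>L. chr p q w s * cnj (chr p q w s')) = 0"
  shows "\<exists>u1 u2. u1 \<in> {0..<p} \<and> u2 \<in> {0..<p} \<and> (u1, u2) \<noteq> (0, 0) \<and>
           (\<forall>l\<in>{1..<p}. (((l * u1) mod p, (l * u2) mod p), (0, 0)) \<notin> diffset p q S)"
proof (rule ccontr)
  assume neg: "\<not> ?thesis"
  have p0: "p \<noteq> 0" using p by auto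
  have H: "(\<Sum>w\<in>L. cis (2*pi*(of_int (fst (fst w) * u1 + snd (fst w) * u2)/of_int p))) = 0"
    if u: "u1 \<in> {0..<p}" "u2 \<in> {0..<p}" "(u1, u2) \<noteq> (0,0)" for u1 u2
  proof -
    have "\<exists>l\<in>{1..<p}. (((l * u1) mod p, (l * u2) mod p), (0, 0)) \<in> diffset p q S"
    proof (rule ccontr)
      assume "\<not> (\<exists>l\<in>{1..<p}. (((l * u1) mod p, (l * u2) mod p), (0, 0)) \<in> diffset p q S)"
      hence "\<forall>l\<in>{1..<p}. (((l * u1) mod p, (l * u2) mod p), (0, 0)) \<notin> diffset p q S" by blast
      hence "u1 \<in> {0..<p} \<and> u2 \<in> {0..<p} \<and> (u1, u2) \<noteq> (0, 0) \<and>
           (\<forall>l\<in>{1..<p}. (((l * u1) mod p, (l * u2) mod p), (0, 0)) \<notin> diffset p q S)" using u by (intro conjI)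
      hence "\<exists>u1 u2. u1 \<in> {0..<p} \<and> u2 \<in> {0..<p} \<and> (u1, u2) \<noteq> (0, 0) \<and>
           (\<forall>l\<in>{1..<p}. (((l * u1) mod p, (l * u2) mod p), (0, 0)) \<notin> diffset p q S)" by (intro exI)
      thus False using neg by (rule notE[rotated])
    qed
    then obtain l where l: "l \<in> {1..<p}" "(((l * u1) mod p, (l * u2) mod p), (0, 0)) \<in> diffset p q S" by (rule bexE)
    have "\<exists>s s'. (((l * u1) mod p, (l * u2) mod p), (0, 0)) = gsub p q s s' \<and> s \<in> S \<and> s' \<in> S"
      using l(2) unfolding diffset_def by (simp only: mem_Collect_eq)
    then obtain s s' where ss0: "(((l * u1) mod p, (l * u2) mod p), (0, 0)) = gsub p q s s'" "s \<in> S" "s' \<in> S"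
      by (elim exE conjE)
    hence ss: "s \<in> S" "s' \<in> S" "gsub p q s s' = (((l * u1) mod p, (l * u2) mod p), (0, 0))" by simp_all
    have nl: "\<not> p dvd l" using l dvd_small_int[of l p] by auto
    have "s \<noteq> s'"
    proof
      assume "s = s'"
      hence "(l * u1) mod p = 0" "(l * u2) mod p = 0" using ss(3) by (auto simp: gsub_def)
      hence "p dvd l * u1" "p dvd l * u2" by auto
      hence "p dvd u1" "p dvd u2" using p nl prime_dvd_mult_iff by blast+
      hence "u1 = 0" "u2 = 0" using u dvd_small_int by auto
      thus False using u by simp
    qed
    hence "(\<Sum>w\<in>L. chr p q w s * cnj (chr p q w s')) = 0" using dual ss by blast
    moreover have "chr p q w s * cnj (chr p q w s') = cis (2*pi*(of_int (l * (fst (fst w) * u1 + snd (fst w) * u2))/of_int p))" for w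
    proof -
      have "fst (fst w) * (l * u1) + snd (fst w) * (l * u2) = l * (fst (fst w) * u1 + snd (fst w) * u2)"
        by (simp add: algebra_simps)
      thus ?thesis using chr_term[OF p0 q ss(3), of w] by simp
    qed
    ultimately have "(\<Sum>w\<in>L. cis (2*pi*(of_int (l * (fst (fst w) * u1 + snd (fst w) * u2))/of_int p))) = 0" by simp
    from galois[OF p fL nl this] show ?thesis .
  qed
  have rng: "fst (fst w) \<in> {0..<p} \<and> snd (fst w) \<in> {0..<p}" if "w \<in> L" for w
    using LG that by (auto simp: grp_def)
  from fourier[OF p fL rng H] have "int (card L) = p^2 * int (card {w\<in>L. fst w = (0,0)})" by blast
  hence "p^2 dvd int (card L)" by simp
  thus False using ndvd by simp
qed

definition sw :: "elt \<Rightarrow> elt" where "sw x = (snd x, fst x)"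

lemma sw_sw[simp]: "sw (sw x) = x" by (simp add: sw_def)
lemma inj_sw: "inj sw" by (metis injI sw_sw)
lemma chr_sw: "chr q p (sw w) (sw x) = chr p q w x"
  unfolding chr_def sw_def by (simp add: add.commute)
lemma gsub_sw: "gsub q p (sw x) (sw y) = sw (gsub p q x y)"
  unfolding gsub_def sw_def by simp
lemma grp_sw: "x \<in> grp p q \<Longrightarrow> sw x \<in> grp q p"
  unfolding grp_def sw_def by auto

theorem lemma4p5:
  fixes p q :: int and S :: "elt set"
  assumes "prime p" and "prime q" and "p \<noteq> q"
    and "S \<subseteq> grp p q"
    and "spectral p q S"
    and "gcd (int (card S)) (p^2 * q^2) = p * q"
    and "p * q < int (card S)" and "int (card S) < p * q * min p q"
  shows "\<exists>u1 u2 v1 v2.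
           u1 \<in> {0..<p} \<and> u2 \<in> {0..<p} \<and> (u1, u2) \<noteq> (0, 0) \<and>
           v1 \<in> {0..<q} \<and> v2 \<in> {0..<q} \<and> (v1, v2) \<noteq> (0, 0) \<and>
           (\<forall>l\<in>{1..<p}. (((l * u1) mod p, (l * u2) mod p), (0, 0)) \<notin> diffset p q S) \<and>
           (\<forall>m\<in>{1..<q}. ((0, 0), ((m * v1) mod q, (m * v2) mod q)) \<notin> diffset p q S)"
proof -
  note p = assms(1) and q = assms(2)
  have p0: "p \<noteq> 0" and q0: "q \<noteq> 0" using p q by auto
  have fG: "finite (grp p q)" by (simp add: grp_def)
  have fS: "finite S" using assms(4) fG finite_subset by blast
  obtain L where L: "L \<subseteq> grp p q" "card L = card S"
    "\<And>l l'. l \<in> L \<Longrightarrow> l' \<in> L \<Longrightarrow> l \<noteq> l' \<Longrightarrow> chr_sum p q (gsub p q l l') S = 0"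
    using assms(5) unfolding spectral_def by blast
  have fL: "finite L" using L(1) fG finite_subset by blast
  have orth: "(\<Sum>s\<in>S. chr p q l s * cnj (chr p q l' s)) = 0" if "l \<in> L" "l' \<in> L" "l \<noteq> l'" for l l'
    using L(3)[OF that] by (simp add: chr_sum_def chr_gsub[OF p0 q0])
  have dual: "(\<Sum>w\<in>L. chr p q w s * cnj (chr p q w s')) = 0" if "s \<in> S" "s' \<in> S" "s \<noteq> s'" for s s'
    using dual_generic[OF fS fL L(2), of "chr p q", OF chr_unit orth, of s' s] that
    by (simp add: mult.commute)
  have ndp: "\<not> p^2 dvd int (card S)"
  proof
    assume "p^2 dvd int (card S)"
    hence "p^2 dvd gcd (int (card S)) (p^2 * q^2)" by (rule gcd_greatest) simp
    hence "p^2 dvd p * q" using assms(6) by simp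
    hence "p dvd q" using p0 by (simp add: power2_eq_square)
    hence "p = q" using primes_dvd_imp_eq[OF p q] by blast
    thus False using assms(3) by simp
  qed
  have ndq: "\<not> q^2 dvd int (card S)"
  proof
    assume "q^2 dvd int (card S)"
    hence "q^2 dvd gcd (int (card S)) (p^2 * q^2)" by (rule gcd_greatest) simp
    hence "q^2 dvd p * q" using assms(6) by simp
    hence "q dvd p" using q0 by (simp add: power2_eq_square mult.commute)
    hence "q = p" using primes_dvd_imp_eq[OF q p] by blast
    thus False using assms(3) by simp
  qed
  obtain u1 u2 where U: "u1 \<in> {0..<p} \<and> u2 \<in> {0..<p} \<and> (u1, u2) \<noteq> (0, 0) \<and>
           (\<forall>l\<in>{1..<p}. (((l * u1) mod p, (l * u2) mod p), (0, 0)) \<notin> diffset p q S)"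
  proof -
    have "\<not> p^2 dvd int (card L)" using L(2) ndp by simp
    from partP[OF p q0 fL L(1) this dual] show ?thesis using that by blast
  qed
  have fL': "finite (sw ` L)" using fL by simp
  have LG': "sw ` L \<subseteq> grp q p" using L(1) grp_sw by auto
  have cL': "card (sw ` L) = card S" using L(2) card_image[OF inj_on_subset[OF inj_sw]] by simp
  have dual': "(\<Sum>w\<in>sw ` L. chr q p w s * cnj (chr q p w s')) = 0"
    if ss_in: "s \<in> sw ` S" "s' \<in> sw ` S" "s \<noteq> s'" for s s'
  proof -
    obtain t where t1: "t \<in> S" "s = sw t" using ss_in(1) by blast
    obtain t' where t2: "t' \<in> S" "s' = sw t'" using ss_in(2) by blast
    have t: "t \<in> S" "t' \<in> S" "s = sw t" "s' = sw t'" using t1 t2 by simp_all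
    have "t \<noteq> t'" using t ss_in(3) by auto
    have "(\<Sum>w\<in>sw ` L. chr q p w s * cnj (chr q p w s')) = (\<Sum>w\<in>L. chr q p (sw w) (sw t) * cnj (chr q p (sw w) (sw t')))"
      using t by (simp add: sum.reindex[OF inj_on_subset[OF inj_sw]])
    also have "\<dots> = (\<Sum>w\<in>L. chr p q w t * cnj (chr p q w t'))" by (simp add: chr_sw)
    also have "\<dots> = 0" using dual t \<open>t \<noteq> t'\<close> by blast
    finally show ?thesis .
  qed
  obtain v1 v2 where V: "v1 \<in> {0..<q} \<and> v2 \<in> {0..<q} \<and> (v1, v2) \<noteq> (0, 0) \<and>
           (\<forall>m\<in>{1..<q}. (((m * v1) mod q, (m * v2) mod q), (0, 0)) \<notin> diffset q p (sw ` S))"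
  proof -
    have "\<not> q^2 dvd int (card (sw ` L))" using cL' ndq by simp
    from partP[OF q p0 fL' LG' this dual'] show ?thesis using that by blast
  qed
  have V2: "\<forall>m\<in>{1..<q}. ((0, 0), ((m * v1) mod q, (m * v2) mod q)) \<notin> diffset p q S"
  proof (intro ballI notI)
    fix m assume m: "m \<in> {1..<q}" and d: "((0, 0), ((m * v1) mod q, (m * v2) mod q)) \<in> diffset p q S"
    have "\<exists>t t'. ((0, 0), ((m * v1) mod q, (m * v2) mod q)) = gsub p q t t' \<and> t \<in> S \<and> t' \<in> S"
      using d unfolding diffset_def by (simp only: mem_Collect_eq)
    then obtain t t' where tt: "((0, 0), ((m * v1) mod q, (m * v2) mod q)) = gsub p q t t'" "t \<in> S" "t' \<in> S"
      by (elim exE conjE)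
    hence t: "t \<in> S" "t' \<in> S" "gsub p q t t' = ((0, 0), ((m * v1) mod q, (m * v2) mod q))" by simp_all
    have "gsub q p (sw t) (sw t') = sw (gsub p q t t')" by (rule gsub_sw)
    also have "\<dots> = (((m * v1) mod q, (m * v2) mod q), (0, 0))" using t(3) by (simp add: sw_def)
    finally have "gsub q p (sw t) (sw t') = (((m * v1) mod q, (m * v2) mod q), (0, 0))" .
    hence "(((m * v1) mod q, (m * v2) mod q), (0, 0)) \<in> diffset q p (sw ` S)"
      unfolding diffset_def mem_Collect_eq using t(1,2)
      by (intro exI[of _ "sw t"] exI[of _ "sw t'"] conjI) auto
    thus False using V m by blast
  qed
  show ?thesis using U V V2 by blast
qed

end
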